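(* Let $K\ge2$, $\alpha\in(0,\infty)^K$, and let $H:\mathbb{R}^K\to\mathbb{R}$ satisfy (A1)–(A4) below at $\theta^*\in\Delta_{K-1}$. Let $N\in\mathbb{N}$ and $0<\epsilon<\min_{i:\theta^*_i>0}\theta^*_i$. Then there exists $\delta>0$, independent of $\gamma\in(0,1)$, such that for every $\gamma\in(0,1)$, as $n\to\infty$, $$\frac{\mathrm{Bias}(\hat p^\gamma_{\mathrm{IS}})^2}{\mathrm{Var}(\hat p_{\mathrm{MC}})}=O(e^{-2n\delta}).$$
   Context: $\Delta_{K-1}=\{\theta\in\mathbb{R}^K:\theta_i\ge0,\sum_i\theta_i=1\}$; $\mathrm{Dir}_\eta$ is the Dirichlet distribution with density $\frac{1}{B(\eta)}\prod_i\theta_i^{\eta_i-1}$. Target $I(n)=\mathbb{E}_{\mathrm{Dir}_\alpha}[e^{nH(\theta)}]$. $\hat p_{\mathrm{MC}}=\frac1N\sum_{i=1}^Ne^{nH(\theta^{(i)})}$, $\theta^{(i)}$ i.i.d. $\mathrm{Dir}_\alpha$; $\hat p^\gamma_{\mathrm{IS}}=\frac1N\sum_{i=1}^N e^{nH(\theta^{(i)})}\frac{\mathrm{Dir}_\alpha(\theta^{(i)})}{\mathrm{Dir}_{\alpha+n^\gamma\theta^*}(\theta^{(i)})}\mathbf{1}_{\Delta^\epsilon_{K-1}}(\theta^{(i)})$, $\theta^{(i)}$ i.i.d. $\mathrm{Dir}_{\alpha+n^\gamma\theta^*}$, with $\Delta^\epsilon_{K-1}=\{\theta\in\Delta_{K-1}:\theta_i\ge\epsilon\text{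 whenever }\theta^*_i>0\}$. $\mathrm{Bias}(\hat p)=\mathbb{E}[\hat p]-I(n)$. Conditions, with $Z=\{i:\theta^*_i=0\}$: (A1) $H$ attains its maximum over $\Delta_{K-1}$ only at $\theta^*$. (A2) $H$ is continuous on $\Delta_{K-1}$ and $C^2$ near $\theta^*$. There are unique KKT multipliers $\lambda_i\ge0$ ($i\in Z$), $\mu$ with $\nabla H(\theta^* )=-\sum_{i\in Z}\lambda_ie_i+\mu\mathbf{1}_K$. (A3) $\lambda_i>0$ for $i\in Z$. (A4) $d^\top\nabla^2H(\theta^* )d<0$ for all nonzero $d$ with $\mathbf{1}_K^\top d=0$, $d_i=0$ ($i\in Z$). *)

theory Defs
  imports "HOL-Probability.Probability" "HOL-Library.Landau_Symbols"
begin

text \<open>Coordinates of R^K are indexed by the type 'm option, so K = CARD('m) + 1 \<ge> 2.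
  The coordinate None plays the role of the last coordinate theta_K = 1 - sum of the others.\<close>

definition prob_simplex :: "(real ^ ('m::finite option)) set" where
  "prob_simplex = {\<theta>. (\<forall>i. 0 \<le> \<theta> $ i) \<and> (\<Sum>i\<in>UNIV. \<theta> $ i) = 1}"

definition simplex_emb :: "real ^ ('m::finite) \<Rightarrow> real ^ ('m option)" where
  "simplex_emb y = (\<chi> i. case i of None \<Rightarrow> 1 - (\<Sum>j\<in>UNIV. y $ j) | Some j \<Rightarrow> y $ j)"

definition dir_beta :: "real ^ ('m::finite option) \<Rightarrow> real" where
  "dir_beta \<eta> = (\<Prod>i\<in>UNIV. Gamma (\<eta> $ i)) / Gamma (\<Sum>i\<in>UNIV. \<eta> $ i)"

text \<open>Dirichlet density (w.r.t. Lebesgue measure in the first K-1 coordinates), zero off the prob_simplex.\<close>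
definition dir_pdf :: "real ^ ('m::finite option) \<Rightarrow> real ^ ('m option) \<Rightarrow> real" where
  "dir_pdf \<eta> \<theta> = (if \<theta> \<in> prob_simplex
      then (\<Prod>i\<in>UNIV. (\<theta> $ i) powr (\<eta> $ i - 1)) / dir_beta \<eta> else 0)"

definition dirichlet :: "real ^ ('m::finite option) \<Rightarrow> (real ^ ('m option)) measure" where
  "dirichlet \<eta> = distr (density lborel (\<lambda>y. ennreal (dir_pdf \<eta> (simplex_emb y)))) borel simplex_emb"

definition dir_sample :: "nat \<Rightarrow> real ^ ('m::finite option) \<Rightarrow> (nat \<Rightarrow> real ^ ('m option)) measure" where
  "dir_sample N \<eta> = PiM {..<N} (\<lambda>_. dirichlet \<eta>)"

definition Expect :: "'a measure \<Rightarrow> ('a \<Rightarrow> real) \<Rightarrow> real" where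
  "Expect M X = (\<integral>x. X x \<partial>M)"

definition Var :: "'a measure \<Rightarrow> ('a \<Rightarrow> real) \<Rightarrow> real" where
  "Var M X = (\<integral>x. (X x - Expect M X)\<^sup>2 \<partial>M)"

definition I_target :: "(real ^ ('m::finite option) \<Rightarrow> real) \<Rightarrow> real ^ ('m option) \<Rightarrow> nat \<Rightarrow> real" where
  "I_target H \<alpha> n = Expect (dirichlet \<alpha>) (\<lambda>\<theta>. exp (real n * H \<theta>))"

definition p_MC :: "(real ^ ('m::finite option) \<Rightarrow> real) \<Rightarrow> nat \<Rightarrow> nat \<Rightarrow> (nat \<Rightarrow> real ^ ('m option)) \<Rightarrow> real" where
  "p_MC H N n \<omega> = (\<Sum>i<N. exp (real n * H (\<omega> i))) / real N"

definition trunc_simplex :: "real ^ ('m::finite option) \<Rightarrow> real \<Rightarrow> (real ^ ('m option)) set" where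
  "trunc_simplex \<theta>s \<epsilon> = {\<theta> \<in> prob_simplex. \<forall>i. 0 < \<theta>s $ i \<longrightarrow> \<epsilon> \<le> \<theta> $ i}"

definition IS_param :: "real ^ ('m::finite option) \<Rightarrow> real ^ ('m option) \<Rightarrow> real \<Rightarrow> nat \<Rightarrow> real ^ ('m option)" where
  "IS_param \<alpha> \<theta>s \<gamma> n = \<alpha> + (real n powr \<gamma>) *\<^sub>R \<theta>s"

definition p_IS :: "(real ^ ('m::finite option) \<Rightarrow> real) \<Rightarrow> real ^ ('m option) \<Rightarrow> real ^ ('m option)
     \<Rightarrow> real \<Rightarrow> real \<Rightarrow> nat \<Rightarrow> nat \<Rightarrow> (nat \<Rightarrow> real ^ ('m option)) \<Rightarrow> real" where
  "p_IS H \<alpha> \<theta>s \<epsilon> \<gamma> N n \<omega> = (\<Sum>i<N. exp (real n * H (\<omega> i))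
       * (dir_pdf \<alpha> (\<omega> i) / dir_pdf (IS_param \<alpha> \<theta>s \<gamma> n) (\<omega> i))
       * indicator (trunc_simplex \<theta>s \<epsilon>) (\<omega> i)) / real N"

definition bias_IS where
  "bias_IS H \<alpha> \<theta>s \<epsilon> \<gamma> N n =
     Expect (dir_sample N (IS_param \<alpha> \<theta>s \<gamma> n)) (p_IS H \<alpha> \<theta>s \<epsilon> \<gamma> N n) - I_target H \<alpha> n"

definition var_MC where
  "var_MC H \<alpha> N n = Var (dir_sample N \<alpha>) (p_MC H N n)"

end

theory Submission
  imports Defs
begin

lemma beta_scaled:
  fixes a c s :: real assumes a: "a>0" and c: "c>0" and s: "s>0"
  shows "((\<lambda>t. t powr (a-1) * (s-t) powr (c-1)) has_integral (s powr (a+c-1) * Beta a c)) {0..s}"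
proof -
  have h: "((\<lambda>t. t powr (a - 1) * (1 - t) powr (c - 1)) has_integral Beta a c) (cbox 0 1)"
    using has_integral_Beta_real[OF a c] by simp
  from has_integral_affinity[OF h, of "1/s" 0] s
  have h2: "((\<lambda>x. (x/s) powr (a - 1) * (1 - x/s) powr (c - 1)) has_integral s * Beta a c) ((\<lambda>x. s * x) ` {0..1})"
    by simp
  have img: "(\<lambda>x. s * x) ` {0..1} = {0..s}"
    using s by (auto simp: image_iff intro!: bexI[where x="_/s"])
  have h3: "((\<lambda>x. (s powr (a-1) * s powr (c-1)) * ((x/s) powr (a - 1) * (1 - x/s) powr (c - 1))) has_integral (s powr (a-1) * s powr (c-1)) * (s * Beta a c)) {0..s}"
    using has_integral_mult_right[OF h2[unfolded img]] by simp
  have eq: "(s powr (a-1) * s powr (c-1)) * ((x/s) powr (a - 1) * (1 - x/s) powr (c - 1)) = x powr (a-1) * (s-x) powr (c-1)"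
    if "x \<in> {0..s}" for x
  proof -
    have "1 - x/s = (s-x)/s" using s by (simp add: field_simps)
    then show ?thesis using that s by (simp add: powr_divide)
  qed
  have val: "(s powr (a-1) * s powr (c-1)) * (s * Beta a c) = s powr (a+c-1) * Beta a c"
    using s by (simp add: powr_add[symmetric] powr_mult_base algebra_simps)
  show ?thesis using h3 eq val by (metis (no_types, lifting) has_integral_eq)
qed

lemma beta_nn:
  fixes a c s :: real assumes a: "a>0" and c: "c>0" and s: "s>0"
  shows "(\<integral>\<^sup>+ t. ennreal (indicator {0..s} t * (t powr (a-1) * (s-t) powr (c-1))) \<partial>lborel) = ennreal (s powr (a+c-1) * Beta a c)"
proof (rule nn_integral_has_integral_lborel)
  show "(\<lambda>t. indicator {0..s} t * (t powr (a - 1) * (s - t) powr (c - 1))) \<in> borel_measurable borel"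
    by measurable
  show "0 \<le> indicator {0..s} x * (x powr (a - 1) * (s - x) powr (c - 1))" for x
    by (simp add: indicator_def)
  have "((\<lambda>x. if x \<in> {0..s} then x powr (a-1) * (s-x) powr (c-1) else 0) has_integral (s powr (a+c-1) * Beta a c)) UNIV"
    using beta_scaled[OF a c s] by (simp only: has_integral_restrict_UNIV)
  moreover have "(\<lambda>t. indicator {0..s} t * (t powr (a - 1) * (s - t) powr (c - 1))) = (\<lambda>x. if x \<in> {0..s} then x powr (a-1) * (s-x) powr (c-1) else 0)"
    by (rule ext) (simp add: indicator_def)
  ultimately show "((\<lambda>t. indicator {0..s} t * (t powr (a - 1) * (s - t) powr (c - 1))) has_integral s powr (a + c - 1) * Beta a c) UNIV"
    by simp
qed

definition Fd :: "'b set \<Rightarrow> ('b \<Rightarrow> real) \<Rightarrow> real \<Rightarrow> real \<Rightarrow> ('b \<Rightarrow> real) \<Rightarrow> real" where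
  "Fd J a b s x = (\<Prod>j\<in>J. indicator {0..} (x j) * x j powr (a j - 1)) *
     (indicator {0..} (s - sum x J) * (s - sum x J) powr (b - 1))"

lemma Fd_nonneg: "0 \<le> Fd J a b s x"
  unfolding Fd_def by (intro mult_nonneg_nonneg prod_nonneg) (auto simp: indicator_def)

lemma Fd_zero: assumes "s \<le> 0" shows "Fd J a b s x = 0"
proof (cases "finite J")
  case False
  then have "s < 0 \<or> s = 0" using assms by linarith
  then show ?thesis using False unfolding Fd_def by (auto simp: indicator_def)
next
  case fin: True
  show ?thesis
  proof (cases "\<forall>j\<in>J. 0 \<le> x j")
    case True
    have "0 \<le> sum x J" using True by (simp add: sum_nonneg)
    then have "s - sum x J < 0 \<or> s - sum x J = 0" using assms by linarith
    then show ?thesis unfolding Fd_def by (auto simp: indicator_def)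
  next
    case False
    then obtain j where j: "j \<in> J" "x j < 0" by auto
    have "(\<Prod>j\<in>J. indicator {0..} (x j) * x j powr (a j - 1)) = (0::real)"
      using j fin by (intro prod_zero) (auto intro!: bexI[of _ j] simp: indicator_def)
    then show ?thesis unfolding Fd_def by simp
  qed
qed

lemma Fd_insert:
  assumes "finite J" "i \<notin> J"
  shows "Fd (insert i J) a b s (x(i:=t)) = (indicator {0..} t * t powr (a i - 1)) * Fd J a b (s - t) x"
proof -
  have p: "(\<Prod>j\<in>J. indicator {0..} ((x(i:=t)) j) * (x(i:=t)) j powr (a j - 1)) = (\<Prod>j\<in>J. indicator {0..} (x j) * x j powr (a j - 1))"
    using assms by (intro prod.cong) auto
  have sm: "sum (x(i:=t)) J = sum x J"
    using assms by (intro sum.cong) auto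
  show ?thesis unfolding Fd_def prod.insert[OF assms] sum.insert[OF assms] p sm
    by (simp add: algebra_simps)
qed

lemma Fd_meas: "finite J \<Longrightarrow> (\<lambda>x. Fd J a b s x) \<in> borel_measurable (PiM J (\<lambda>_. lborel))"
  unfolding Fd_def by measurable

lemma Fd_meas_enn: "finite J \<Longrightarrow> (\<lambda>x. ennreal (Fd J a b s x)) \<in> borel_measurable (PiM J (\<lambda>_. lborel))"
  using Fd_meas by measurable

interpretation lb: product_sigma_finite "\<lambda>_. lborel :: real measure"
  by unfold_locales

lemma dir_int:
  fixes a :: "'b \<Rightarrow> real"
  assumes "finite J" "\<forall>j\<in>J. 0 < a j" "0 < b" "0 < s"
  shows "(\<integral>\<^sup>+ x. ennreal (Fd J a b s x) \<partial>PiM J (\<lambda>_. lborel)) =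
     ennreal (s powr (sum a J + b - 1) * (\<Prod>j\<in>J. Gamma (a j)) * Gamma b / Gamma (sum a J + b))"
  using assms
proof (induction J arbitrary: s rule: finite_induct)
  case empty
  have g: "Gamma b > 0" by (intro Gamma_real_pos) (use empty.prems in auto)
  show ?case using empty.prems g
    apply (simp add: PiM_empty nn_integral_count_space_finite Fd_def indicator_def)
    apply (metis Gamma_real_pos less_irrefl)
    done
next
  case (insert i J)
  define A where "A = sum a J"
  define C where "C = (\<Prod>j\<in>J. Gamma (a j)) * Gamma b / Gamma (A + b)"
  have A0: "0 \<le> A" unfolding A_def by (rule sum_nonneg) (use insert.prems in force)
  have ai: "0 < a i" using insert.prems by auto
  have C1: "0 < C" unfolding C_def using insert.prems A0
    by (intro divide_pos_pos mult_pos_pos prod_pos Gamma_real_pos) auto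
  have C0: "0 \<le> C" using C1 by simp
  have inner: "(\<integral>\<^sup>+ x. ennreal (Fd J a b (s - t) x) \<partial>PiM J (\<lambda>_. lborel)) =
      ennreal (indicator {..<s} t * ((s - t) powr (A + b - 1) * C))" for t
  proof (cases "t < s")
    case True
    then show ?thesis using insert.IH[of "s - t"] insert.prems
      by (simp add: A_def C_def mult.assoc)
  next
    case False
    then show ?thesis by (simp add: Fd_zero)
  qed
  have "(\<integral>\<^sup>+ x. ennreal (Fd (insert i J) a b s x) \<partial>PiM (insert i J) (\<lambda>_. lborel)) =
     (\<integral>\<^sup>+ t. (\<integral>\<^sup>+ x. ennreal (Fd (insert i J) a b s (x(i:=t))) \<partial>PiM J (\<lambda>_. lborel)) \<partial>lborel)"
  proof (rule lb.product_nn_integral_insert_rev)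
    have [measurable]: "Fd (insert i J) a b s \<in> borel_measurable (PiM (insert i J) (\<lambda>_. lborel))"
      by (rule Fd_meas) (use insert.hyps in auto)
    show "(\<lambda>x. ennreal (Fd (insert i J) a b s x)) \<in> borel_measurable (PiM (insert i J) (\<lambda>_. lborel))"
      by measurable
  qed (use insert.hyps in auto)
  also have "\<dots> = (\<integral>\<^sup>+ t. ennreal (indicator {0..} t * t powr (a i - 1)) * (\<integral>\<^sup>+ x. ennreal (Fd J a b (s - t) x) \<partial>PiM J (\<lambda>_. lborel)) \<partial>lborel)"
    apply (rule nn_integral_cong)
    apply (subst Fd_insert[OF insert.hyps])
    apply (subst ennreal_mult)
      apply (simp add: indicator_def)
     apply (rule Fd_nonneg)
    apply (rule nn_integral_cmult)
    using insert.hyps Fd_meas_enn by auto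
  also have "\<dots> = (\<integral>\<^sup>+ t. ennreal (indicator {0..s} t * (t powr (a i - 1) * (s - t) powr (A + b - 1))) * ennreal C \<partial>lborel)"
  proof (rule nn_integral_cong)
    fix t :: real
    let ?X = "indicator {0..} t * t powr (a i - 1)"
    let ?Y = "indicator {..<s} t * ((s - t) powr (A + b - 1) * C)"
    let ?Z = "indicator {0..s} t * (t powr (a i - 1) * (s - t) powr (A + b - 1))"
    have X0: "0 \<le> ?X" and Y0: "0 \<le> ?Y" and Z0: "0 \<le> ?Z" using C0 by (auto simp: indicator_def)
    have e: "?X * ?Y = ?Z * C" by (auto simp: indicator_def)
    have "ennreal ?X * ennreal ?Y = ennreal (?X * ?Y)" by (rule ennreal_mult[symmetric, OF X0 Y0])
    also have "\<dots> = ennreal ?Z * ennreal C" by (subst e, rule ennreal_mult[OF Z0 C0])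
    finally show "ennreal ?X * (\<integral>\<^sup>+ x. ennreal (Fd J a b (s - t) x) \<partial>PiM J (\<lambda>_. lborel)) = ennreal ?Z * ennreal C"
      by (simp only: inner)
  qed
  also have "\<dots> = ennreal (s powr (a i + (A + b) - 1) * Beta (a i) (A + b)) * ennreal C"
    apply (subst nn_integral_multc)
     apply measurable
    apply (subst beta_nn)
    using ai A0 insert.prems apply auto
    done
  also have "\<dots> = ennreal (s powr (sum a (insert i J) + b - 1) * (\<Prod>j\<in>insert i J. Gamma (a j)) * Gamma b / Gamma (sum a (insert i J) + b))"
  proof -
    have "Gamma (A + b) > 0" using A0 insert.prems by (intro Gamma_real_pos) auto
    then have "s powr (a i + (A + b) - 1) * Beta (a i) (A + b) * C = s powr (sum a (insert i J) + b - 1) * (\<Prod>j\<in>insert i J. Gamma (a j)) * Gamma b / Gamma (sum a (insert i J) + b)"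
      using insert.hyps unfolding Beta_def C_def A_def by (simp add: field_simps)
    moreover have Bpos: "0 < Beta (a i) (A+b)" unfolding Beta_def using ai A0 insert.prems
      by (intro divide_pos_pos mult_pos_pos Gamma_real_pos) auto
    moreover have "0 \<le> s powr (a i + (A + b) - 1) * Beta (a i) (A + b)"
      using Bpos by simp
    ultimately show ?thesis
      using C0 by (subst ennreal_mult[symmetric]) auto

  qed
  finally show ?case .
qed

lemma sum_option: "(\<Sum>i\<in>(UNIV::'a::finite option set). g i) = g None + (\<Sum>j\<in>UNIV. g (Some j))"
  by (simp add: UNIV_option_conv sum.reindex)

lemma prod_option: "(\<Prod>i\<in>(UNIV::'a::finite option set). g i) = g None * (\<Prod>j\<in>UNIV. g (Some j))"
  by (simp add: UNIV_option_conv prod.reindex)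

lemma Basis_vec_real: "(Basis :: (real^'m::finite) set) = range (\<lambda>j. axis j 1)"
  by (auto simp: Basis_vec_def)

lemma inj_axis1: "inj (\<lambda>j::'m::finite. axis j (1::real))"
  by (auto simp: inj_def axis_eq_axis)

lemma vec_sum_comp: "(\<Sum>b\<in>(Basis :: (real^'m::finite) set). f b *\<^sub>R b) $ j = f (axis j 1)"
proof -
  have "(\<Sum>b\<in>(Basis :: (real^'m::finite) set). f b *\<^sub>R b) $ j = (\<Sum>b\<in>Basis. f b * (b $ j))"
    by (simp add: sum_component)
  also have "\<dots> = (\<Sum>k\<in>UNIV. f (axis k 1) * (axis k (1::real) $ j))"
    unfolding Basis_vec_real by (subst sum.reindex[OF inj_axis1]) simp
  also have "\<dots> = f (axis j 1)"
    by (simp add: axis_def if_distrib cong: if_cong)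
  finally show ?thesis .
qed

lemma simplex_emb_sum: "(\<Sum>i\<in>UNIV. simplex_emb y $ i) = 1"
  by (simp add: sum_option simplex_emb_def)

lemma dir_beta_pos: assumes "\<forall>i. 0 < \<eta> $ i" shows "0 < dir_beta \<eta>"
  unfolding dir_beta_def using assms
  by (intro divide_pos_pos prod_pos Gamma_real_pos sum_pos) auto

lemma dir_pdf_emb:
  "dir_pdf \<eta> (simplex_emb y) = (if (\<forall>j. 0 \<le> y $ j) \<and> 0 \<le> 1 - (\<Sum>j\<in>UNIV. y $ j)
     then (1 - (\<Sum>j\<in>UNIV. y $ j)) powr (\<eta> $ None - 1) * (\<Prod>j\<in>UNIV. (y $ j) powr (\<eta> $ Some j - 1)) / dir_beta \<eta> else 0)"
proof -
  have "simplex_emb y \<in> prob_simplex \<longleftrightarrow> (\<forall>j. 0 \<le> y $ j) \<and> 0 \<le> 1 - (\<Sum>j\<in>UNIV. y $ j)"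
    unfolding prob_simplex_def using simplex_emb_sum[of y]
    by (auto simp: simplex_emb_def split: option.splits)
  then show ?thesis unfolding dir_pdf_def
    by (simp add: prod_option simplex_emb_def)
qed

lemma dir_pdf_emb_meas[measurable]: "(\<lambda>y. dir_pdf \<eta> (simplex_emb y)) \<in> borel_measurable borel"
  unfolding dir_pdf_emb by measurable

lemma dir_pdf_emb_meas_enn[measurable]: "(\<lambda>y. ennreal (dir_pdf \<eta> (simplex_emb y))) \<in> borel_measurable borel"
  by measurable

lemma dir_total:
  fixes \<eta> :: "real ^ ('m::finite option)"
  assumes pos: "\<forall>i. 0 < \<eta> $ i"
  shows "(\<integral>\<^sup>+ y. ennreal (dir_pdf \<eta> (simplex_emb (y :: real^'m))) \<partial>lborel) = 1"
proof -
  define a where "a b = \<eta> $ Some (inv (\<lambda>j::'m. axis j (1::real)) b)" for b :: "real^'m"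
  have a_ax: "a (axis j 1) = \<eta> $ Some j" for j
    unfolding a_def using [[show_types, show_sorts]] by (subst inv_f_f[OF inj_axis1]) (rule refl)
  let ?E = "\<lambda>f::(real^'m) \<Rightarrow> real. \<Sum>b\<in>Basis. f b *\<^sub>R b"
  have Bpos: "0 < dir_beta \<eta>" using dir_beta_pos[OF pos] .
  have key: "dir_pdf \<eta> (simplex_emb (?E f)) = Fd Basis a (\<eta> $ None) 1 f / dir_beta \<eta>" for f
  proof -
    have P: "(\<Prod>b\<in>Basis. indicator {0..} (f b) * f b powr (a b - 1)) =
       (\<Prod>j\<in>UNIV. indicator {0..} (f (axis j 1)) * f (axis j 1) powr (\<eta> $ Some j - 1))"
      unfolding Basis_vec_real by (subst prod.reindex[OF inj_axis1]) (simp add: a_ax)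
    have S: "sum f Basis = (\<Sum>j\<in>UNIV. f (axis j 1))"
      unfolding Basis_vec_real by (subst sum.reindex[OF inj_axis1]) simp
    show ?thesis
    proof (cases "(\<forall>j. 0 \<le> f (axis j 1)) \<and> 0 \<le> 1 - (\<Sum>j\<in>UNIV. f (axis j 1))")
      case True
      then show ?thesis unfolding dir_pdf_emb vec_sum_comp Fd_def P S
        by (simp add: indicator_def mult.commute)
    next
      case False
      then show ?thesis unfolding dir_pdf_emb vec_sum_comp Fd_def P S
        by (auto simp: indicator_def prod_zero_iff)
    qed
  qed
  have "(\<integral>\<^sup>+ y. ennreal (dir_pdf \<eta> (simplex_emb (y :: real^'m))) \<partial>lborel) =
        (\<integral>\<^sup>+ f. ennreal (dir_pdf \<eta> (simplex_emb (?E f))) \<partial>PiM Basis (\<lambda>_. lborel))"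
    apply (subst lborel_eq)
    apply (subst nn_integral_distr)
    using dir_pdf_emb_meas_enn by auto
  also have "\<dots> = (\<integral>\<^sup>+ f. ennreal (Fd Basis a (\<eta> $ None) 1 f) * ennreal (1 / dir_beta \<eta>) \<partial>PiM Basis (\<lambda>_. lborel))"
    apply (rule nn_integral_cong)
    apply (subst key)
    apply (subst ennreal_mult[symmetric])
    using Bpos by (auto simp: Fd_nonneg)
  also have "\<dots> = (\<integral>\<^sup>+ f. ennreal (Fd Basis a (\<eta> $ None) 1 f) \<partial>PiM Basis (\<lambda>_. lborel)) * ennreal (1 / dir_beta \<eta>)"
    by (rule nn_integral_multc) (simp add: Fd_meas_enn)
  also have "\<dots> = ennreal (1 powr (sum a Basis + \<eta> $ None - 1) * (\<Prod>j\<in>Basis. Gamma (a j)) * Gamma (\<eta> $ None) / Gamma (sum a Basis + \<eta> $ None)) * ennreal (1 / dir_beta \<eta>)"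
    apply (subst dir_int) using pos by (auto simp: Basis_vec_real a_ax)
  also have "\<dots> = 1"
  proof -
    have sa: "sum a Basis = (\<Sum>j\<in>UNIV. \<eta> $ Some j)"
      unfolding Basis_vec_real by (subst sum.reindex[OF inj_axis1]) (simp add: a_ax)
    have pa: "(\<Prod>j\<in>Basis. Gamma (a j)) = (\<Prod>j\<in>UNIV. Gamma (\<eta> $ Some j))"
      unfolding Basis_vec_real by (subst prod.reindex[OF inj_axis1]) (simp add: a_ax)
    have G: "0 < Gamma (\<eta> $ None + (\<Sum>j\<in>UNIV. \<eta> $ Some j))"
      using pos by (intro Gamma_real_pos add_pos_nonneg sum_nonneg) (auto simp: less_imp_le)
    have gn: "\<forall>i. Gamma (\<eta> $ i) \<noteq> 0" using pos Gamma_real_pos by (metis less_irrefl)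
    have "(\<Prod>j\<in>Basis. Gamma (a j)) * Gamma (\<eta> $ None) / Gamma (sum a Basis + \<eta> $ None) * (1 / dir_beta \<eta>) = 1"
      unfolding sa pa dir_beta_def sum_option prod_option using Bpos G gn
      by (simp add: field_simps dir_beta_def sum_option prod_option)
    then have eqB: "1 powr (sum a Basis + \<eta> $ None - 1) * (\<Prod>j\<in>Basis. Gamma (a j)) * Gamma (\<eta> $ None) / Gamma (sum a Basis + \<eta> $ None) = dir_beta \<eta>"
      using Bpos by (simp add: field_simps)
    have "ennreal (dir_beta \<eta>) * ennreal (1 / dir_beta \<eta>) = ennreal (dir_beta \<eta> * (1 / dir_beta \<eta>))"
      using Bpos by (subst ennreal_mult) auto
    also have "\<dots> = 1" using Bpos by simp
    finally show ?thesis unfolding eqB .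
  qed
  finally show ?thesis .
qed
lemma simplex_emb_cont: "continuous_on UNIV (simplex_emb :: real^'m::finite \<Rightarrow> real^'m option)"
  unfolding simplex_emb_def
  apply (rule continuous_on_vec_lambda)
  subgoal for i by (cases i) (auto intro!: continuous_intros)
  done

lemma simplex_emb_meas[measurable]: "(simplex_emb :: real^'m::finite \<Rightarrow> real^'m option) \<in> borel_measurable borel"
  by (rule borel_measurable_continuous_onI[OF simplex_emb_cont])

lemma closed_simplex: "closed (prob_simplex :: (real^'m::finite option) set)"
proof -
  have "prob_simplex = (\<Inter>i. {\<theta>::real^'m option. 0 \<le> \<theta> $ i}) \<inter> {\<theta>. (\<Sum>i\<in>UNIV. \<theta> $ i) = 1}"
    unfolding prob_simplex_def by auto
  also have "closed \<dots>"
    by (intro closed_Int closed_INT ballI closed_Collect_le closed_Collect_eq continuous_intros)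
  finally show ?thesis .
qed

lemma simplex_sets[measurable]: "(prob_simplex :: (real^'m::finite option) set) \<in> sets borel"
  by (rule borel_closed[OF closed_simplex])

lemma bounded_simplex: "bounded (prob_simplex :: (real^'m::finite option) set)"
proof -
  have "norm \<theta> \<le> (\<Sum>i\<in>UNIV. \<bar>\<theta> $ i\<bar>)" for \<theta> :: "real^'m option"
    by (rule norm_le_l1_cart)
  moreover have "\<theta> \<in> prob_simplex \<Longrightarrow> (\<Sum>i\<in>UNIV. \<bar>\<theta> $ i\<bar>) = 1" for \<theta> :: "real^'m option"
    unfolding prob_simplex_def by auto
  ultimately show ?thesis unfolding bounded_iff by (metis order_refl)
qed

lemma compact_simplex: "compact (prob_simplex :: (real^'m::finite option) set)"
  using closed_simplex bounded_simplex by (simp add: compact_eq_bounded_closed)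

lemma dir_pdf_meas[measurable]: "dir_pdf \<eta> \<in> borel_measurable borel"
  unfolding dir_pdf_def by measurable

lemma sets_dirichlet[simp, measurable_cong]: "sets (dirichlet \<eta>) = sets borel"
  by (simp add: dirichlet_def)

lemma space_dirichlet[simp]: "space (dirichlet \<eta>) = UNIV"
  by (simp add: dirichlet_def)

lemma dir_prob: assumes "\<forall>i. 0 < \<eta> $ i" shows "prob_space (dirichlet \<eta>)"
proof -
  have "prob_space (density lborel (\<lambda>y::real^'a. ennreal (dir_pdf \<eta> (simplex_emb y))))"
    apply (rule prob_spaceI)
    apply (subst emeasure_density)
    using dir_total[OF assms] by auto
  then show ?thesis unfolding dirichlet_def
    by (rule prob_space.prob_space_distr) simp
qed
lemma dir_pdf_nonneg: assumes "\<forall>i. 0 < \<eta> $ i" shows "0 \<le> dir_pdf \<eta> \<theta>"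
  unfolding dir_pdf_def using dir_beta_pos[OF assms]
  by (auto intro!: divide_nonneg_pos prod_nonneg)

lemma dir_pdf_zero_iff: assumes "\<forall>i. 0 < \<eta> $ i"
  shows "dir_pdf \<eta> \<theta> = 0 \<longleftrightarrow> \<theta> \<notin> prob_simplex \<or> (\<exists>i. \<theta> $ i = 0)"
  unfolding dir_pdf_def using dir_beta_pos[OF assms]
  by (auto simp: prod_zero_iff)

lemma dir_change:
  fixes \<alpha> \<beta> :: "real^('m::finite option)"
  assumes pa: "\<forall>i. 0 < \<alpha> $ i" and pb: "\<forall>i. 0 < \<beta> $ i"
    and h[measurable]: "h \<in> borel_measurable borel" and f[measurable]: "f \<in> borel_measurable borel"
    and eq: "\<And>\<theta>. dir_pdf \<beta> \<theta> * h \<theta> = dir_pdf \<alpha> \<theta> * f \<theta>"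
  shows "integrable (dirichlet \<beta>) h \<longleftrightarrow> integrable (dirichlet \<alpha>) f"
    and "integral\<^sup>L (dirichlet \<beta>) h = integral\<^sup>L (dirichlet \<alpha>) f"
proof -
  have I: "integrable (dirichlet \<eta>) k \<longleftrightarrow> integrable lborel (\<lambda>y::real^'m. dir_pdf \<eta> (simplex_emb y) * k (simplex_emb y))"
    if "\<forall>i. 0 < \<eta> $ i" "k \<in> borel_measurable borel" for \<eta> and k :: "real^('m option) \<Rightarrow> real"
    unfolding dirichlet_def
    apply (subst integrable_distr_eq)
      apply (simp_all add: that)
    apply (subst integrable_density)
    using that dir_pdf_nonneg[OF that(1)] by auto
  have J: "integral\<^sup>L (dirichlet \<eta>) k = integral\<^sup>L lborel (\<lambda>y::real^'m. dir_pdf \<eta> (simplex_emb y) * k (simplex_emb y))"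
    if "\<forall>i. 0 < \<eta> $ i" "k \<in> borel_measurable borel" for \<eta> and k :: "real^('m option) \<Rightarrow> real"
    unfolding dirichlet_def
    apply (subst integral_distr)
      apply (simp_all add: that)
    apply (subst integral_density)
    using that dir_pdf_nonneg[OF that(1)] by auto
  show "integrable (dirichlet \<beta>) h \<longleftrightarrow> integrable (dirichlet \<alpha>) f"
    using I[OF pb h] I[OF pa f] eq by simp
  show "integral\<^sup>L (dirichlet \<beta>) h = integral\<^sup>L (dirichlet \<alpha>) f"
    using J[OF pb h] J[OF pa f] eq by simp
qed

lemma dir_AE: assumes "\<forall>i. 0 < \<eta> $ i" shows "AE \<theta> in dirichlet \<eta>. \<theta> \<in> prob_simplex"
  unfolding dirichlet_def
  apply (subst AE_distr_iff)
    apply simp_all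
  apply (subst AE_density)
   apply simp
  apply (rule AE_I2)
  by (auto simp: dir_pdf_def)

lemma open_pos_lborel:
  fixes A :: "'a::euclidean_space set"
  assumes "open A" "x \<in> A" shows "0 < emeasure lborel A"
proof -
  obtain a b where ab: "box a b \<subseteq> A" "x \<in> box a b" "\<forall>i\<in>Basis. a \<bullet> i < b \<bullet> i"
    using open_contains_box[OF assms] by blast
  have "0 < emeasure lborel (box a b)"
    using ab(3) by (subst emeasure_lborel_box) (auto intro!: prod_pos simp: inner_diff_left less_imp_le)
  also have "\<dots> \<le> emeasure lborel A"
    using ab(1) assms(1) by (intro emeasure_mono) auto
  finally show ?thesis .
qed

lemma emb_inv: assumes "(\<Sum>i\<in>UNIV. \<theta> $ i) = 1"
  shows "simplex_emb (\<chi> j. \<theta> $ Some j) = (\<theta> :: real^('m::finite option))"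
proof -
  have "\<theta> $ None = 1 - (\<Sum>j\<in>UNIV. \<theta> $ Some j)" using assms by (simp add: sum_option)
  then show ?thesis unfolding simplex_emb_def
    by (auto simp: vec_eq_iff split: option.splits)
qed

lemma interior_point:
  fixes \<theta>0 :: "real^('m::finite option)"
  assumes "\<theta>0 \<in> prob_simplex" "0 < r"
  shows "\<exists>\<theta>. (\<forall>i. 0 < \<theta> $ i) \<and> (\<Sum>i\<in>UNIV. \<theta> $ i) = 1 \<and> dist \<theta> \<theta>0 < r"
proof -
  define K where "K = real CARD('m option)"
  have K: "0 < K" unfolding K_def by simp
  define u :: "real^('m option)" where "u = (\<chi> i. 1 / K)"
  define t where "t = min (1/2) (r / (2 * (norm (u - \<theta>0) + 1)))"
  have "0 < r / (2 * (norm (u - \<theta>0) + 1))" using assms(2) by (intro divide_pos_pos) (auto intro: add_nonneg_pos)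
  then have t01: "0 < t" unfolding t_def by simp
  have t02: "t \<le> 1/2" unfolding t_def by (rule min.cobounded1)
  note t0 = t01 t02
  have tn: "t * norm (u - \<theta>0) < r"
  proof -
    have "t * norm (u - \<theta>0) \<le> r / (2 * (norm (u - \<theta>0) + 1)) * norm (u - \<theta>0)"
      by (intro mult_right_mono) (auto simp: t_def)
    also have "\<dots> < r"
    proof -
      have n0: "0 \<le> norm (u - \<theta>0)" by simp
      have q: "norm (u - \<theta>0) / (2 * (norm (u - \<theta>0) + 1)) < 1"
        using n0 apply (simp add: divide_less_eq) using n0 by linarith
      have "r / (2 * (norm (u - \<theta>0) + 1)) * norm (u - \<theta>0) = r * (norm (u - \<theta>0) / (2 * (norm (u - \<theta>0) + 1)))"
        by simp
      also have "\<dots> < r * 1" using q assms(2) by (intro mult_strict_left_mono) auto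
      finally show ?thesis by simp
    qed
    finally show ?thesis .
  qed
  define \<theta> where "\<theta> = (1 - t) *\<^sub>R \<theta>0 + t *\<^sub>R u"
  have pos: "0 < \<theta> $ i" for i
  proof -
    have "0 \<le> (1 - t) * \<theta>0 $ i" using assms(1) t0 unfolding prob_simplex_def by auto
    moreover have "0 < t * (1/K)" using t0 K by simp
    ultimately show ?thesis unfolding \<theta>_def u_def by simp
  qed
  have sum1: "(\<Sum>i\<in>UNIV. \<theta> $ i) = 1"
  proof -
    have "(\<Sum>i\<in>UNIV. \<theta> $ i) = (1 - t) * (\<Sum>i\<in>UNIV. \<theta>0 $ i) + t * (\<Sum>i\<in>(UNIV::'m option set). 1 / K)"
      unfolding \<theta>_def u_def by (simp add: sum.distrib sum_distrib_left)
    also have "\<dots> = 1" using assms(1) K unfolding prob_simplex_def K_def by simp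
    finally show ?thesis .
  qed
  have "\<theta> - \<theta>0 = t *\<^sub>R (u - \<theta>0)" unfolding \<theta>_def by (simp add: algebra_simps)
  then have "dist \<theta> \<theta>0 = t * norm (u - \<theta>0)" using t0 by (simp add: dist_norm)
  with tn pos sum1 show ?thesis by (intro exI[of _ \<theta>]) auto
qed

lemma dir_pos:
  fixes \<eta> \<theta>0 :: "real^('m::finite option)"
  assumes pos: "\<forall>i. 0 < \<eta> $ i" and th: "\<theta>0 \<in> prob_simplex" and r: "0 < r"
  shows "0 < measure (dirichlet \<eta>) (prob_simplex \<inter> ball \<theta>0 r)"
proof -
  interpret prob_space "dirichlet \<eta>" by (rule dir_prob[OF pos])
  let ?A = "prob_simplex \<inter> ball \<theta>0 r"
  define Op where "Op = simplex_emb -` (ball \<theta>0 r \<inter> (\<Inter>i. {\<theta>::real^('m option). 0 < \<theta> $ i}))"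
  have openO: "open Op" unfolding Op_def
    by (intro open_vimage simplex_emb_cont open_Int open_ball open_INT)
       (auto intro!: open_Collect_less continuous_intros)
  obtain \<theta> where \<theta>: "\<forall>i. 0 < \<theta> $ i" "(\<Sum>i\<in>UNIV. \<theta> $ i) = 1" "dist \<theta> \<theta>0 < r"
    using interior_point[OF th r] by blast
  have y0: "(\<chi> j. \<theta> $ Some j) \<in> Op"
    unfolding Op_def using emb_inv[OF \<theta>(2)] \<theta> by (auto simp: dist_commute)
  have posO: "0 < dir_pdf \<eta> (simplex_emb y) * indicator ?A (simplex_emb y)" if "y \<in> Op" for y
  proof -
    have a: "\<forall>i. 0 < simplex_emb y $ i" "simplex_emb y \<in> ball \<theta>0 r" using that unfolding Op_def by auto
    then have S: "simplex_emb y \<in> prob_simplex"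
      unfolding prob_simplex_def using simplex_emb_sum[of y] by (auto intro: less_imp_le)
    have nz: "\<not>(\<exists>i. simplex_emb y $ i = 0)" using a(1) by (metis less_irrefl)
    have "dir_pdf \<eta> (simplex_emb y) \<noteq> 0" using dir_pdf_zero_iff[OF pos, of "simplex_emb y"] S nz by blast
    then have "0 < dir_pdf \<eta> (simplex_emb y)" using dir_pdf_nonneg[OF pos] by (simp add: order_less_le)
    then show ?thesis using S a by simp
  qed
  have Ameas[measurable]: "?A \<in> sets borel" by simp
  have "emeasure (dirichlet \<eta>) ?A = (\<integral>\<^sup>+ y. ennreal (dir_pdf \<eta> (simplex_emb y)) * indicator (simplex_emb -` ?A) y \<partial>lborel)"
    unfolding dirichlet_def
    apply (subst emeasure_distr)
      apply simp
     apply simp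
    apply (subst emeasure_density)
      apply simp
    using measurable_sets[OF simplex_emb_meas Ameas] apply simp
    apply simp
    done
  also have "\<dots> = (\<integral>\<^sup>+ y. ennreal (dir_pdf \<eta> (simplex_emb y) * indicator ?A (simplex_emb y)) \<partial>lborel)"
    by (intro nn_integral_cong) (auto simp: indicator_def)
  finally have E: "emeasure (dirichlet \<eta>) ?A = \<dots>" .
  have "emeasure (dirichlet \<eta>) ?A \<noteq> 0"
  proof
    assume "emeasure (dirichlet \<eta>) ?A = 0"
    then have "AE y in lborel. ennreal (dir_pdf \<eta> (simplex_emb y) * indicator ?A (simplex_emb y)) = 0"
      unfolding E by (subst (asm) nn_integral_0_iff_AE) measurable
    then have "AE y in lborel. y \<notin> Op"
      by eventually_elim (use posO in force)
    then have "emeasure lborel Op = 0"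
      using openO by (subst (asm) AE_iff_measurable[of Op]) auto
    then show False using open_pos_lborel[OF openO y0] by simp
  qed
  then show ?thesis using emeasure_eq_measure[of ?A] by (simp add: zero_less_measure_iff)
qed
lemma coord_int:
  assumes M: "prob_space M" and i: "i < N" and f[measurable]: "f \<in> borel_measurable M"
  shows "integrable (PiM {..<N} (\<lambda>_. M)) (\<lambda>\<omega>. f (\<omega> i)) \<longleftrightarrow> integrable M (f :: _ \<Rightarrow> real)"
    and "integral\<^sup>L (PiM {..<N} (\<lambda>_. M)) (\<lambda>\<omega>. f (\<omega> i)) = integral\<^sup>L M f"
proof -
  have D: "distr (PiM {..<N} (\<lambda>_. M)) M (\<lambda>\<omega>. \<omega> i) = M"
    by (rule distr_PiM_component) (use M i in auto)
  have m: "(\<lambda>\<omega>. \<omega> i) \<in> PiM {..<N} (\<lambda>_. M) \<rightarrow>\<^sub>M M"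
    using i by (intro measurable_component_singleton) auto
  show "integrable (PiM {..<N} (\<lambda>_. M)) (\<lambda>\<omega>. f (\<omega> i)) \<longleftrightarrow> integrable M f"
    using integrable_distr_eq[OF m f] D by simp
  show "integral\<^sup>L (PiM {..<N} (\<lambda>_. M)) (\<lambda>\<omega>. f (\<omega> i)) = integral\<^sup>L M f"
    using integral_distr[OF m f] D by simp
qed

lemma avg_int:
  assumes M: "prob_space M" and N: "0 < N" and f[measurable]: "f \<in> borel_measurable M" and fi: "integrable M f"
  shows "integral\<^sup>L (PiM {..<N} (\<lambda>_. M)) (\<lambda>\<omega>. (\<Sum>i<N. f (\<omega> i)) / real N) = integral\<^sup>L M (f :: _ \<Rightarrow> real)"
proof -
  have "integral\<^sup>L (PiM {..<N} (\<lambda>_. M)) (\<lambda>\<omega>. (\<Sum>i<N. f (\<omega> i)) / real N) =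
        integral\<^sup>L (PiM {..<N} (\<lambda>_. M)) (\<lambda>\<omega>. (\<Sum>i<N. f (\<omega> i))) / real N"
    by (rule integral_divide_zero)
  also have "\<dots> = (\<Sum>i<N. integral\<^sup>L (PiM {..<N} (\<lambda>_. M)) (\<lambda>\<omega>. f (\<omega> i))) / real N"
    by (subst Bochner_Integration.integral_sum) (use coord_int(1)[OF M _ f] fi in auto)
  also have "\<dots> = (\<Sum>i<N. integral\<^sup>L M f) / real N"
    by (intro arg_cong[where f="\<lambda>x. x / real N"] sum.cong) (auto simp: coord_int(2)[OF M _ f])
  also have "\<dots> = integral\<^sup>L M f" using N by simp
  finally show ?thesis .
qed

lemma AE_all_coord:
  fixes N :: nat
  assumes M: "prob_space M" and P: "AE x in M. P x"
  shows "AE \<omega> in PiM {..<N} (\<lambda>_. M). \<forall>i<N. P (\<omega> i)"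
proof -
  have "\<forall>i\<in>{..<N}. AE \<omega> in PiM {..<N} (\<lambda>_. M). P (\<omega> i)"
    using AE_PiM_component[of "{..<N}" "\<lambda>_. M" _ P] M P by auto
  then have "AE \<omega> in PiM {..<N} (\<lambda>_. M). \<forall>i\<in>{..<N}. P (\<omega> i)"
    by (intro eventually_ball_finite) auto
  then show ?thesis by (rule AE_mp) (auto intro!: AE_I2)
qed

lemma measure_PiE_pow:
  fixes N :: nat
  assumes M: "prob_space M" and B: "B \<in> sets M"
  shows "measure (PiM {..<N} (\<lambda>_. M)) (PiE {..<N} (\<lambda>_. B)) = (measure M B) ^ N"
proof -
  interpret prob_space M by (rule M)
  interpret fp: finite_product_prob_space "\<lambda>_. M" "{..<N}"
    by unfold_locales auto
  show ?thesis using fp.finite_measure_PiM_emb[of "\<lambda>_. B"] B by simp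
qed

lemma abs_int_le:
  assumes "prob_space M" "integrable M k" "AE x in M. \<bar>k x\<bar> \<le> c"
  shows "\<bar>integral\<^sup>L M (k :: _ \<Rightarrow> real)\<bar> \<le> c"
proof -
  interpret prob_space M by (rule assms(1))
  have "\<bar>integral\<^sup>L M k\<bar> \<le> integral\<^sup>L M (\<lambda>x. \<bar>k x\<bar>)"
    by (rule integral_abs_bound)
  also have "\<dots> \<le> integral\<^sup>L M (\<lambda>x. c)"
    using assms by (intro integral_mono_AE) auto
  also have "\<dots> = c" using prob_space by simp
  finally show ?thesis .
qed

lemma trunc_closed: "closed (trunc_simplex \<theta>s \<epsilon>)"
proof -
  have "trunc_simplex \<theta>s \<epsilon> = prob_simplex \<inter> (\<Inter>i\<in>{i. 0 < \<theta>s $ i}. {\<theta>. \<epsilon> \<le> \<theta> $ i})"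
    unfolding trunc_simplex_def by auto
  also have "closed \<dots>"
    by (intro closed_Int closed_simplex closed_INT ballI closed_Collect_le continuous_intros)
  finally show ?thesis .
qed

lemma trunc_sets[measurable]: "trunc_simplex \<theta>s \<epsilon> \<in> sets borel"
  by (rule borel_closed[OF trunc_closed])

lemma bias_bound:
  fixes H :: "real ^ ('m::finite option) \<Rightarrow> real" and \<alpha> \<theta>s :: "real ^ ('m option)"
  assumes pa: "\<forall>i. 0 < \<alpha> $ i" and th: "\<theta>s \<in> prob_simplex"
    and Hm[measurable]: "H \<in> borel_measurable borel"
    and Hmax: "\<forall>\<theta>\<in>prob_simplex. H \<theta> \<le> Hx"
    and H1: "\<forall>\<theta>\<in>prob_simplex. \<theta> \<notin> trunc_simplex \<theta>s \<epsilon> \<longrightarrow> H \<theta> \<le> H1"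
    and N: "0 < N"
  shows "\<bar>bias_IS H \<alpha> \<theta>s \<epsilon> \<gamma> N n\<bar> \<le> exp (real n * H1)"
proof -
  define \<beta> where "\<beta> = IS_param \<alpha> \<theta>s \<gamma> n"
  have pb: "\<forall>i. 0 < \<beta> $ i"
  proof
    fix i
    have "0 \<le> \<theta>s $ i" using th unfolding prob_simplex_def by auto
    then have "0 \<le> real n powr \<gamma> * \<theta>s $ i" by simp
    then show "0 < \<beta> $ i" using pa unfolding \<beta>_def IS_param_def by (simp add: add_pos_nonneg)
  qed
  interpret Da: prob_space "dirichlet \<alpha>" by (rule dir_prob[OF pa])
  interpret Db: prob_space "dirichlet \<beta>" by (rule dir_prob[OF pb])
  let ?T = "trunc_simplex \<theta>s \<epsilon>"
  define g where "g \<theta> = exp (real n * H \<theta>)" for \<theta>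
  define gT where "gT \<theta> = g \<theta> * indicator ?T \<theta>" for \<theta>
  define f where "f \<theta> = exp (real n * H \<theta>) * (dir_pdf \<alpha> \<theta> / dir_pdf \<beta> \<theta>) * indicator ?T \<theta>" for \<theta>
  have [measurable]: "g \<in> borel_measurable borel" "gT \<in> borel_measurable borel" "f \<in> borel_measurable borel"
    unfolding g_def gT_def f_def by measurable
  have gS: "\<bar>g \<theta>\<bar> \<le> exp (real n * Hx)" if "\<theta> \<in> prob_simplex" for \<theta>
    using Hmax that unfolding g_def by (auto intro!: mult_left_mono)
  have gi: "integrable (dirichlet \<alpha>) g"
    by (rule Da.integrable_const_bound[where B="exp (real n * Hx)"])
       (use dir_AE[OF pa] gS in \<open>auto elim!: AE_mp\<close>)
  have gTi: "integrable (dirichlet \<alpha>) gT"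
    by (rule Da.integrable_const_bound[where B="exp (real n * Hx)"])
       (use dir_AE[OF pa] gS in \<open>auto elim!: AE_mp simp: gT_def indicator_def\<close>)
  have eq: "dir_pdf \<beta> \<theta> * f \<theta> = dir_pdf \<alpha> \<theta> * gT \<theta>" for \<theta>
  proof (cases "dir_pdf \<beta> \<theta> = 0")
    case True
    then have "dir_pdf \<alpha> \<theta> = 0" using dir_pdf_zero_iff[OF pb] dir_pdf_zero_iff[OF pa] by blast
    then show ?thesis using True by simp
  next
    case False
    then show ?thesis unfolding f_def gT_def g_def by (simp add: field_simps)
  qed
  have fi: "integrable (dirichlet \<beta>) f" using dir_change(1)[OF pa pb _ _ eq] gTi by simp
  have fint: "integral\<^sup>L (dirichlet \<beta>) f = integral\<^sup>L (dirichlet \<alpha>) gT"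
    using dir_change(2)[OF pa pb _ _ eq] by simp
  have E: "Expect (dir_sample N \<beta>) (p_IS H \<alpha> \<theta>s \<epsilon> \<gamma> N n) = integral\<^sup>L (dirichlet \<alpha>) gT"
  proof -
    have "p_IS H \<alpha> \<theta>s \<epsilon> \<gamma> N n = (\<lambda>\<omega>. (\<Sum>i<N. f (\<omega> i)) / real N)"
      unfolding p_IS_def f_def \<beta>_def by (rule ext) simp
    then show ?thesis unfolding Expect_def dir_sample_def
      using avg_int[OF dir_prob[OF pb] N _ fi] fint by simp
  qed
  have bias: "bias_IS H \<alpha> \<theta>s \<epsilon> \<gamma> N n = integral\<^sup>L (dirichlet \<alpha>) (\<lambda>\<theta>. gT \<theta> - g \<theta>)"
  proof -
    have "bias_IS H \<alpha> \<theta>s \<epsilon> \<gamma> N n = Expect (dir_sample N \<beta>) (p_IS H \<alpha> \<theta>s \<epsilon> \<gamma> N n) - I_target H \<alpha> n"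
      unfolding bias_IS_def \<beta>_def by simp
    also have "\<dots> = integral\<^sup>L (dirichlet \<alpha>) gT - integral\<^sup>L (dirichlet \<alpha>) g"
      using E unfolding I_target_def Expect_def g_def by simp
    also have "\<dots> = integral\<^sup>L (dirichlet \<alpha>) (\<lambda>\<theta>. gT \<theta> - g \<theta>)"
      using gi gTi by simp
    finally show ?thesis .
  qed
  show ?thesis unfolding bias
  proof (rule abs_int_le[OF dir_prob[OF pa]])
    show "integrable (dirichlet \<alpha>) (\<lambda>\<theta>. gT \<theta> - g \<theta>)" using gi gTi by simp
    show "AE x in dirichlet \<alpha>. \<bar>gT x - g x\<bar> \<le> exp (real n * H1)"
      using dir_AE[OF pa]
    proof eventually_elim
      case (elim x)
      show ?case
      proof (cases "x \<in> ?T")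
        case True then show ?thesis by (simp add: gT_def)
      next
        case False
        then have "H x \<le> H1" using H1 elim by auto
        then show ?thesis using False by (simp add: gT_def g_def mult_left_mono)
      qed
    qed
  qed
qed

lemma var_zero_nonmeas:
  fixes H :: "real ^ ('m::finite option) \<Rightarrow> real" and \<alpha> :: "real ^ ('m option)"
  assumes Hn: "H \<notin> borel_measurable borel" and N: "0 < N" and n: "0 < n"
  shows "var_MC H \<alpha> N n = 0"
proof -
  let ?P = "dir_sample N \<alpha>"
  let ?Y = "p_MC H N n"
  have dg: "(\<lambda>\<theta>. \<lambda>i\<in>{..<N}. \<theta>) \<in> borel \<rightarrow>\<^sub>M ?P"
    unfolding dir_sample_def
    by (intro measurable_restrict) (simp add: measurable_ident_sets)
  have Ydg: "?Y (\<lambda>i\<in>{..<N}. \<theta>) = exp (real n * H \<theta>)" for \<theta>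
    unfolding p_MC_def using N by simp
  have Ynm: "?Y \<notin> borel_measurable ?P"
  proof
    assume "?Y \<in> borel_measurable ?P"
    from measurable_comp[OF dg this] have "(\<lambda>\<theta>. exp (real n * H \<theta>)) \<in> borel_measurable borel"
      by (simp add: comp_def Ydg)
    then have "(\<lambda>\<theta>. ln (exp (real n * H \<theta>)) / real n) \<in> borel_measurable borel"
      by measurable
    moreover have "(\<lambda>\<theta>. ln (exp (real n * H \<theta>)) / real n) = H" using n by (simp add: fun_eq_iff)
    ultimately show False using Hn by simp
  qed
  have E0: "Expect ?P ?Y = 0"
    unfolding Expect_def using Ynm by (auto intro!: not_integrable_integral_eq dest: borel_measurable_integrable)
  have Ynn: "0 \<le> ?Y \<omega>" for \<omega> unfolding p_MC_def by (auto intro!: divide_nonneg_nonneg sum_nonneg)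
  have "\<not> integrable ?P (\<lambda>\<omega>. (?Y \<omega> - 0)\<^sup>2)"
  proof
    assume "integrable ?P (\<lambda>\<omega>. (?Y \<omega> - 0)\<^sup>2)"
    then have "(\<lambda>\<omega>. (?Y \<omega>)\<^sup>2) \<in> borel_measurable ?P" by (auto dest: borel_measurable_integrable)
    then have "(\<lambda>\<omega>. sqrt ((?Y \<omega>)\<^sup>2)) \<in> borel_measurable ?P" by measurable
    moreover have "(\<lambda>\<omega>. sqrt ((?Y \<omega>)\<^sup>2)) = ?Y" using Ynn by (simp add: fun_eq_iff)
    ultimately show False using Ynm by simp
  qed
  then show ?thesis unfolding var_MC_def Var_def E0
    by (rule not_integrable_integral_eq)
qed

lemma var_lower:
  fixes H :: "real ^ ('m::finite option) \<Rightarrow> real" and \<alpha> :: "real ^ ('m option)"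
  assumes pa: "\<forall>i. 0 < \<alpha> $ i"
    and Hm[measurable]: "H \<in> borel_measurable borel"
    and Hmax: "\<forall>\<theta>\<in>prob_simplex. H \<theta> \<le> Hx"
    and B[measurable]: "B \<in> sets borel" and BS: "B \<subseteq> prob_simplex" and HB: "\<forall>\<theta>\<in>B. H \<theta> \<le> c1"
    and V[measurable]: "V \<in> sets borel" and HV: "\<forall>\<theta>\<in>V. c2 \<le> H \<theta>"
    and big: "2 * exp (real n * c1) \<le> measure (dirichlet \<alpha>) V * exp (real n * c2)"
    and N: "0 < N"
  shows "(measure (dirichlet \<alpha>) B) ^ N * (measure (dirichlet \<alpha>) V * exp (real n * c2) / 2)\<^sup>2 \<le> var_MC H \<alpha> N n"
proof -
  interpret Da: prob_space "dirichlet \<alpha>" by (rule dir_prob[OF pa])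
  let ?P = "dir_sample N \<alpha>"
  have PP: "prob_space ?P" unfolding dir_sample_def by (intro prob_space_PiM dir_prob[OF pa])
  interpret P: prob_space ?P by (rule PP)
  define g where "g \<theta> = exp (real n * H \<theta>)" for \<theta>
  have [measurable]: "g \<in> borel_measurable borel" unfolding g_def by measurable
  have g0: "0 \<le> g \<theta>" for \<theta> unfolding g_def by simp
  have gS: "g \<theta> \<le> exp (real n * Hx)" if "\<theta> \<in> prob_simplex" for \<theta>
    using Hmax that unfolding g_def by (auto intro!: mult_left_mono)
  have gi: "integrable (dirichlet \<alpha>) g"
    by (rule Da.integrable_const_bound[where B="exp (real n * Hx)"])
       (use dir_AE[OF pa] gS g0 in \<open>auto elim!: AE_mp\<close>)
  define I where "I = integral\<^sup>L (dirichlet \<alpha>) g"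
  define Y where "Y \<omega> = (\<Sum>i<N. g (\<omega> i)) / real N" for \<omega> :: "nat \<Rightarrow> real^('m option)"
  have Ydef: "p_MC H N n = Y" unfolding p_MC_def Y_def g_def by (rule ext) simp
  have [measurable]: "Y \<in> borel_measurable ?P" unfolding Y_def dir_sample_def by measurable
  have EY: "Expect ?P Y = I"
    unfolding Expect_def I_def Y_def dir_sample_def using avg_int[OF dir_prob[OF pa] N _ gi] by simp
  define pV where "pV = measure (dirichlet \<alpha>) V"
  have Ilow: "pV * exp (real n * c2) \<le> I"
  proof -
    have "integral\<^sup>L (dirichlet \<alpha>) (\<lambda>\<theta>. exp (real n * c2) * indicator V \<theta>) \<le> I"
      unfolding I_def
    proof (rule integral_mono)
      show "integrable (dirichlet \<alpha>) (\<lambda>\<theta>. exp (real n * c2) * indicator V \<theta>)"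
        by (intro integrable_mult_right integrable_real_indicator) (auto simp: Da.emeasure_eq_measure)
      show "integrable (dirichlet \<alpha>) g" by (rule gi)
      show "exp (real n * c2) * indicator V \<theta> \<le> g \<theta>" for \<theta>
        using HV g0 by (auto simp: indicator_def g_def intro!: mult_left_mono)
    qed
    moreover have "integral\<^sup>L (dirichlet \<alpha>) (\<lambda>\<theta>. exp (real n * c2) * indicator V \<theta>) = pV * exp (real n * c2)"
      unfolding pV_def by simp
    ultimately show ?thesis by (simp add: mult.commute)
  qed
  define A where "A = PiE {..<N} (\<lambda>_. B)"
  have Asets[measurable]: "A \<in> sets ?P" unfolding A_def dir_sample_def
    by (intro sets_PiM_I_finite) auto
  have PA: "measure ?P A = (measure (dirichlet \<alpha>) B) ^ N"
    unfolding A_def dir_sample_def by (rule measure_PiE_pow[OF dir_prob[OF pa]]) simp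
  define K where "K = (pV * exp (real n * c2) / 2)\<^sup>2"
  have YA: "Y \<omega> \<le> exp (real n * c1)" if "\<omega> \<in> A" for \<omega>
  proof -
    have "(\<Sum>i<N. g (\<omega> i)) \<le> real (card {..<N}) * exp (real n * c1)"
    proof (rule sum_bounded_above)
      fix i assume "i \<in> {..<N}"
      then have "\<omega> i \<in> B" using that unfolding A_def by auto
      then show "g (\<omega> i) \<le> exp (real n * c1)" using HB unfolding g_def by (auto intro!: mult_left_mono)
    qed
    then show ?thesis unfolding Y_def using N by (simp add: divide_le_eq mult.commute)
  qed
  have pw: "K * indicator A \<omega> \<le> (Y \<omega> - I)\<^sup>2" for \<omega>
  proof (cases "\<omega> \<in> A")
    case True
    have "pV * exp (real n * c2) / 2 \<le> I - Y \<omega>" using YA[OF True] Ilow big unfolding pV_def by linarith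
    moreover have "0 \<le> pV * exp (real n * c2) / 2" unfolding pV_def by simp
    ultimately have "K \<le> (I - Y \<omega>)\<^sup>2" unfolding K_def by (rule power_mono)
    then show ?thesis using True by (simp add: power2_commute)
  next
    case False then show ?thesis by simp
  qed
  have Ybd: "AE \<omega> in ?P. \<bar>Y \<omega>\<bar> \<le> exp (real n * Hx)"
  proof -
    have "AE \<omega> in ?P. \<forall>i<N. \<omega> i \<in> prob_simplex"
      unfolding dir_sample_def by (rule AE_all_coord[OF dir_prob[OF pa] dir_AE[OF pa]])
    then show ?thesis
    proof eventually_elim
      case (elim \<omega>)
      have "(\<Sum>i<N. g (\<omega> i)) \<le> real (card {..<N}) * exp (real n * Hx)"
        by (rule sum_bounded_above) (use elim gS in auto)
      then have "Y \<omega> \<le> exp (real n * Hx)" unfolding Y_def using N by (simp add: divide_le_eq mult.commute)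
      moreover have "0 \<le> Y \<omega>" unfolding Y_def using g0 by (auto intro!: divide_nonneg_nonneg sum_nonneg)
      ultimately show ?case by simp
    qed
  qed
  have sqi: "integrable ?P (\<lambda>\<omega>. (Y \<omega> - I)\<^sup>2)"
  proof (rule P.integrable_const_bound[where B="(exp (real n * Hx) + \<bar>I\<bar>)\<^sup>2"])
    show "AE \<omega> in ?P. norm ((Y \<omega> - I)\<^sup>2) \<le> (exp (real n * Hx) + \<bar>I\<bar>)\<^sup>2"
      using Ybd
    proof eventually_elim
      case (elim \<omega>)
      have "\<bar>Y \<omega> - I\<bar> \<le> exp (real n * Hx) + \<bar>I\<bar>" using elim by linarith
      then have "\<bar>Y \<omega> - I\<bar>\<^sup>2 \<le> (exp (real n * Hx) + \<bar>I\<bar>)\<^sup>2" by (rule power_mono) simp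
      then show ?case by simp
    qed
  qed measurable
  have "measure ?P A * K = integral\<^sup>L ?P (\<lambda>\<omega>. K * indicator A \<omega>)"
    by simp
  also have "\<dots> \<le> integral\<^sup>L ?P (\<lambda>\<omega>. (Y \<omega> - I)\<^sup>2)"
    by (intro integral_mono sqi pw integrable_mult_right integrable_real_indicator) (auto simp: P.emeasure_eq_measure)
  also have "\<dots> = var_MC H \<alpha> N n"
    unfolding var_MC_def Var_def Ydef EY ..
  finally show ?thesis unfolding PA K_def pV_def by (simp add: mult.commute)
qed

theorem lemma1:
  fixes H :: "real ^ ('m::finite option) \<Rightarrow> real"
    and \<alpha> \<theta>s :: "real ^ ('m option)"
    and G :: "real ^ ('m option) \<Rightarrow> real ^ ('m option)"
    and Hs :: "real ^ ('m option) \<Rightarrow> real ^ ('m option) ^ ('m option)"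
    and U :: "(real ^ ('m option)) set"
    and N :: nat and \<epsilon> :: real
  defines "Z \<equiv> {i. \<theta>s $ i = 0}"
  assumes alpha_pos: "\<forall>i. 0 < \<alpha> $ i"
    and theta_in: "\<theta>s \<in> prob_simplex"
    and A1: "\<forall>\<theta>\<in>prob_simplex. \<theta> \<noteq> \<theta>s \<longrightarrow> H \<theta> < H \<theta>s"
    and A2_cont: "continuous_on prob_simplex H"
    and A2_U: "open U" "\<theta>s \<in> U"
    and A2_grad: "\<forall>x\<in>U. (H has_derivative (\<lambda>h. G x \<bullet> h)) (at x)"
    and A2_hess: "\<forall>x\<in>U. (G has_derivative (\<lambda>h. Hs x *v h)) (at x)"
    and A2_C2: "continuous_on U Hs"
    and A2_KKT: "\<exists>lam \<mu>. (\<forall>i\<in>Z. 0 \<le> lam i) \<and>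
                   G \<theta>s = (\<chi> i. (if i \<in> Z then - lam i else 0) + \<mu>)"
    and A3: "\<forall>lam \<mu>. (\<forall>i\<in>Z. 0 \<le> lam i) \<and>
                   G \<theta>s = (\<chi> i. (if i \<in> Z then - lam i else 0) + \<mu>) \<longrightarrow> (\<forall>i\<in>Z. 0 < lam i)"
    and A4: "\<forall>d. d \<noteq> 0 \<and> (\<Sum>i\<in>UNIV. d $ i) = 0 \<and> (\<forall>i\<in>Z. d $ i = 0) \<longrightarrow> d \<bullet> (Hs \<theta>s *v d) < 0"
    and N_pos: "0 < N"
    and eps_pos: "0 < \<epsilon>"
    and eps_lt: "\<forall>i. 0 < \<theta>s $ i \<longrightarrow> \<epsilon> < \<theta>s $ i"
  shows "\<exists>\<delta>>0. \<forall>\<gamma>. 0 < \<gamma> \<and> \<gamma> < 1 \<longrightarrow>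
           (\<lambda>n. (bias_IS H \<alpha> \<theta>s \<epsilon> \<gamma> N n)\<^sup>2 / var_MC H \<alpha> N n) \<in> O(\<lambda>n. exp (- 2 * real n * \<delta>))"
proof -
  let ?S = "prob_simplex :: (real ^ ('m option)) set"
  let ?T = "trunc_simplex \<theta>s \<epsilon>"
  define Hx where "Hx = H \<theta>s"
  have Hmax: "\<forall>\<theta>\<in>?S. H \<theta> \<le> Hx"
    using A1 unfolding Hx_def by (metis less_imp_le order_refl)
  obtain H1 where H1: "H1 < Hx" "\<forall>\<theta>\<in>?S. \<theta> \<notin> ?T \<longrightarrow> H \<theta> \<le> H1"
  proof -
    define C where "C = ?S \<inter> (\<Union>i\<in>{i. 0 < \<theta>s $ i}. {\<theta>. \<theta> $ i \<le> \<epsilon>})"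
    have cC: "compact C" unfolding C_def
      by (intro compact_Int_closed compact_simplex closed_UN ballI closed_Collect_le continuous_intros) auto
    have sub: "\<theta> \<in> C" if "\<theta> \<in> ?S" "\<theta> \<notin> ?T" for \<theta>
      using that unfolding C_def trunc_simplex_def by (auto simp: not_le intro: less_imp_le)
    show ?thesis
    proof (cases "C = {}")
      case True
      then show ?thesis using that[of "Hx - 1"] sub by auto
    next
      case False
      have contC: "continuous_on C H"
        by (rule continuous_on_subset[OF A2_cont]) (auto simp: C_def)
      obtain \<theta>m where m: "\<theta>m \<in> C" "\<forall>y\<in>C. H y \<le> H \<theta>m"
        using continuous_attains_sup[OF cC False contC] by blast
      have "\<theta>m \<noteq> \<theta>s" using m(1) eps_lt unfolding C_def by force
      moreover have "\<theta>m \<in> ?S" using m(1) unfolding C_def by auto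
      ultimately have "H \<theta>m < Hx" using A1 unfolding Hx_def by auto
      then show ?thesis using that[of "H \<theta>m"] sub m(2) by auto
    qed
  qed
  obtain v where v: "v \<in> ?S" "v \<noteq> \<theta>s"
  proof -
    define e1 :: "real^('m option)" where "e1 = (\<chi> i. if i = None then 1 else 0)"
    define e2 :: "real^('m option)" where "e2 = (\<chi> i. if i = Some undefined then 1 else 0)"
    have "e1 \<in> ?S" "e2 \<in> ?S" unfolding e1_def e2_def prob_simplex_def by auto
    moreover have "e1 \<noteq> e2" unfolding e1_def e2_def by (auto simp: vec_eq_iff)
    ultimately show ?thesis using that by metis
  qed
  have Hv: "H v < Hx" using A1 v unfolding Hx_def by auto
  define m where "m = max H1 (H v)"
  have m: "m < Hx" "H1 \<le> m" "H v \<le> m" using H1 Hv unfolding m_def by auto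
  define c1 where "c1 = m + (Hx - m) / 3"
  define c2 where "c2 = m + 2 * (Hx - m) / 3"
  have c12: "c1 < c2" "H v < c1" "c2 < Hx" "H1 < c2" using m unfolding c1_def c2_def by (auto simp: field_simps)
  define \<delta> where "\<delta> = c2 - H1"
  have \<delta>: "0 < \<delta>" using c12 unfolding \<delta>_def by simp
  obtain r1 where r1: "0 < r1" "\<forall>\<theta>\<in>?S. dist \<theta> v < r1 \<longrightarrow> H \<theta> \<le> c1"
  proof -
    from A2_cont v(1) c12(2) obtain d where "0 < d" "\<forall>x'\<in>?S. dist x' v < d \<longrightarrow> dist (H x') (H v) < c1 - H v"
      unfolding continuous_on_iff by (metis diff_gt_0_iff_gt)
    then show ?thesis using that[of d] by (force simp: dist_real_def)
  qed
  obtain r2 where r2: "0 < r2" "\<forall>\<theta>\<in>?S. dist \<theta> \<theta>s < r2 \<longrightarrow> c2 \<le> H \<theta>"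
  proof -
    from A2_cont theta_in c12(3) obtain d where "0 < d" "\<forall>x'\<in>?S. dist x' \<theta>s < d \<longrightarrow> dist (H x') (H \<theta>s) < Hx - c2"
      unfolding continuous_on_iff Hx_def by (metis diff_gt_0_iff_gt)
    then show ?thesis using that[of d] unfolding Hx_def by (force simp: dist_real_def)
  qed
  define B where "B = ?S \<inter> ball v r1"
  define V where "V = ?S \<inter> ball \<theta>s r2"
  have B[measurable]: "B \<in> sets borel" and V[measurable]: "V \<in> sets borel" unfolding B_def V_def by auto
  have HB: "\<forall>\<theta>\<in>B. H \<theta> \<le> c1" using r1 unfolding B_def by (auto simp: dist_commute)
  have HV: "\<forall>\<theta>\<in>V. c2 \<le> H \<theta>" using r2 unfolding V_def by (auto simp: dist_commute)
  define pB where "pB = measure (dirichlet \<alpha>) B"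
  define pV where "pV = measure (dirichlet \<alpha>) V"
  have pB: "0 < pB" unfolding pB_def B_def by (rule dir_pos[OF alpha_pos v(1) r1(1)])
  have pV: "0 < pV" unfolding pV_def V_def by (rule dir_pos[OF alpha_pos theta_in r2(1)])
  define \<kappa> where "\<kappa> = pB ^ N * pV\<^sup>2 / 4"
  have \<kappa>: "0 < \<kappa>" unfolding \<kappa>_def using pB pV by simp
  define n0 where "n0 = nat \<lceil>2 / (pV * (c2 - c1))\<rceil> + 1"
  have big: "2 * exp (real n * c1) \<le> pV * exp (real n * c2)" if "n \<ge> n0" for n :: nat
  proof -
    have "2 / (pV * (c2 - c1)) \<le> real n"
      using that unfolding n0_def by linarith
    then have "2 / pV \<le> real n * (c2 - c1)" using pV c12 by (simp add: field_simps)
    also have "\<dots> \<le> exp (real n * (c2 - c1))" using exp_ge_add_one_self[of "real n * (c2 - c1)"] by linarith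
    finally have "2 \<le> pV * exp (real n * (c2 - c1))" using pV by (simp add: field_simps)
    then have "2 * exp (real n * c1) \<le> pV * exp (real n * (c2 - c1)) * exp (real n * c1)"
      by (intro mult_right_mono) auto
    also have "\<dots> = pV * exp (real n * c2)" by (simp add: exp_add[symmetric] algebra_simps)
    finally show ?thesis .
  qed
  show ?thesis
  proof (intro exI[of _ \<delta>] conjI allI impI)
    show "0 < \<delta>" by (rule \<delta>)
    fix \<gamma> :: real assume "0 < \<gamma> \<and> \<gamma> < 1"
    show "(\<lambda>n. (bias_IS H \<alpha> \<theta>s \<epsilon> \<gamma> N n)\<^sup>2 / var_MC H \<alpha> N n) \<in> O(\<lambda>n. exp (- 2 * real n * \<delta>))"
    proof (cases "H \<in> borel_measurable borel")
      case False
      show ?thesis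
      proof (rule bigoI[where c=1])
        show "\<forall>\<^sub>F n in at_top. norm ((bias_IS H \<alpha> \<theta>s \<epsilon> \<gamma> N n)\<^sup>2 / var_MC H \<alpha> N n) \<le> 1 * norm (exp (- 2 * real n * \<delta>))"
          unfolding eventually_at_top_linorder
          by (intro exI[of _ 1] allI impI) (simp add: var_zero_nonmeas[OF False N_pos])
      qed
    next
      case True
      show ?thesis
      proof (rule bigoI[where c="1 / \<kappa>"])
        show "\<forall>\<^sub>F n in at_top. norm ((bias_IS H \<alpha> \<theta>s \<epsilon> \<gamma> N n)\<^sup>2 / var_MC H \<alpha> N n) \<le> 1 / \<kappa> * norm (exp (- 2 * real n * \<delta>))"
          unfolding eventually_at_top_linorder
        proof (intro exI[of _ n0] allI impI)
          fix n assume n: "n0 \<le> n"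
          have bb: "\<bar>bias_IS H \<alpha> \<theta>s \<epsilon> \<gamma> N n\<bar> \<le> exp (real n * H1)"
            by (rule bias_bound[OF alpha_pos theta_in True Hmax H1(2) N_pos])
          have vl: "pB ^ N * (pV * exp (real n * c2) / 2)\<^sup>2 \<le> var_MC H \<alpha> N n"
            unfolding pB_def pV_def
            by (rule var_lower[OF alpha_pos True Hmax B _ HB V HV _ N_pos])
               (use big[OF n] in \<open>auto simp: B_def pV_def\<close>)
          have vk: "pB ^ N * (pV * exp (real n * c2) / 2)\<^sup>2 = \<kappa> * exp (2 * real n * c2)"
            unfolding \<kappa>_def by (simp add: power2_eq_square exp_add[symmetric] field_simps)
          have vpos: "0 < \<kappa> * exp (2 * real n * c2)" using \<kappa> by simp
          have b2: "(bias_IS H \<alpha> \<theta>s \<epsilon> \<gamma> N n)\<^sup>2 \<le> exp (2 * real n * H1)"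
          proof -
            have "(bias_IS H \<alpha> \<theta>s \<epsilon> \<gamma> N n)\<^sup>2 = \<bar>bias_IS H \<alpha> \<theta>s \<epsilon> \<gamma> N n\<bar>\<^sup>2" by simp
            also have "\<dots> \<le> (exp (real n * H1))\<^sup>2" by (rule power_mono[OF bb]) simp
            also have "\<dots> = exp (2 * real n * H1)" by (simp add: power2_eq_square exp_add[symmetric])
            finally show ?thesis .
          qed
          have "(bias_IS H \<alpha> \<theta>s \<epsilon> \<gamma> N n)\<^sup>2 / var_MC H \<alpha> N n \<le> exp (2 * real n * H1) / (\<kappa> * exp (2 * real n * c2))"
            by (rule frac_le[OF _ b2 vpos]) (use vl vk in auto)
          also have "\<dots> = 1 / \<kappa> * exp (- 2 * real n * \<delta>)"
          proof -
            have "- 2 * real n * \<delta> = 2 * real n * H1 - 2 * real n * c2" unfolding \<delta>_def by (simp add: algebra_simps)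
            then have "exp (- 2 * real n * \<delta>) = exp (2 * real n * H1) / exp (2 * real n * c2)" by (simp add: exp_diff)
            then show ?thesis by simp
          qed
          finally have r: "(bias_IS H \<alpha> \<theta>s \<epsilon> \<gamma> N n)\<^sup>2 / var_MC H \<alpha> N n \<le> 1 / \<kappa> * exp (- 2 * real n * \<delta>)" .
          have "0 \<le> (bias_IS H \<alpha> \<theta>s \<epsilon> \<gamma> N n)\<^sup>2 / var_MC H \<alpha> N n"
            using vl vk vpos by (intro divide_nonneg_nonneg) auto
          then show "norm ((bias_IS H \<alpha> \<theta>s \<epsilon> \<gamma> N n)\<^sup>2 / var_MC H \<alpha> N n) \<le> 1 / \<kappa> * norm (exp (- 2 * real n * \<delta>))"
            using r by simp
        qed
      qed
    qed
  qed
qed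

end
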